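(* For every constant $c>0$, with $\Phi\in\Omega(n,\lfloor c2^n\rfloor)$, \[e^{-c}-o(1)\le\Pr[\Phi\text{ is satisfiable}]\le\frac{e^{-c/4}}{1-e^{-c/4}}+o(1)\qquad(n\to\infty).\]
   Context: A Horn clause is a disjunction of literals with at most one positive literal. $\mathcal H_n$ is the set of pairs $(P,S)$ with $P\in\{\emptyset,\{1\},\dots,\{n\}\}$, $S\subseteq\{1,\dots,n\}$, $(P,S)\ne(\emptyset,\emptyset)$, representing the Horn clause $\bigvee_{i\in P}x_i\vee\bigvee_{j\in S}\neg x_j$ (so $|\mathcal H_n|\sim n2^n$; the paper writes this number as $(n+2)2^n-1$); $\Omega(n,m)$ is the distribution of the conjunction of $m$ clauses drawn independently, uniformly with repetition from $\mathcal H_n$. *)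

theory Defs
  imports Complex_Main
begin

text \<open>A Horn clause over variables 1..n is a pair (P,S) with P either empty (None)
  or a singleton {i} (Some i), S a subset of {1..n}, and (P,S) different from (empty,empty).
  It represents the disjunction of x_i (i in P) and of not x_j (j in S).\<close>

type_synonym horn_clause = "nat option \<times> nat set"

definition horn_clauses :: "nat \<Rightarrow> horn_clause set" where
  "horn_clauses n = {(P, S). (P = None \<or> (\<exists>i\<in>{1..n}. P = Some i)) \<and> S \<subseteq> {1..n}
                        \<and> (P, S) \<noteq> (None, {})}"

text \<open>Truth assignments are given by the set A of variables set to true.\<close>
definition clause_sat :: "nat set \<Rightarrow> horn_clause \<Rightarrow> bool" where
  "clause_sat A C = ((\<exists>i. fst C = Some i \<and> i \<in> A) \<or> (\<exists>j\<in>snd C. j \<notin> A))"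

definition formula_satisfiable :: "nat \<Rightarrow> horn_clause list \<Rightarrow> bool" where
  "formula_satisfiable n cs = (\<exists>A\<subseteq>{1..n}. \<forall>C\<in>set cs. clause_sat A C)"

text \<open>Omega(n,m): m clauses drawn independently and uniformly with repetition from H_n,
  i.e. the uniform distribution on length-m lists of elements of H_n.\<close>
definition horn_formulas :: "nat \<Rightarrow> nat \<Rightarrow> horn_clause list set" where
  "horn_formulas n m = {cs. length cs = m \<and> set cs \<subseteq> horn_clauses n}"

definition prob_sat :: "nat \<Rightarrow> nat \<Rightarrow> real" where
  "prob_sat n m = real (card {cs \<in> horn_formulas n m. formula_satisfiable n cs})
                   / real (card (horn_formulas n m))"

end

theory Submission
  imports Defs "HOL-Real_Asymp.Real_Asymp"
begin

lemma H_eq: "horn_clauses n = ((insert None (Some ` {1..n})) \<times> Pow {1..n}) - {(None, {})}"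
  unfolding horn_clauses_def by auto

lemma finite_H: "finite (horn_clauses n)"
  unfolding H_eq by auto

lemma card_H: "card (horn_clauses n) = (n+1)*2^n - 1"
proof -
  have "card (insert None (Some ` {1..n})) = n + 1"
    by (subst card_insert_disjoint) (auto simp: card_image)
  then have "card ((insert None (Some ` {1..n})) \<times> Pow {1..n}) = (n+1)*2^n"
    by (simp add: card_cartesian_product card_Pow)
  then show ?thesis unfolding H_eq
    by (subst card_Diff_singleton) auto
qed

lemma card_hf: "card (horn_formulas n m) = card (horn_clauses n) ^ m"
  unfolding horn_formulas_def using card_lists_length_eq[OF finite_H] by (simp add: conj_commute)

lemma finite_hf: "finite (horn_formulas n m)"
  unfolding horn_formulas_def using finite_lists_length_eq[OF finite_H] by (simp add: conj_commute)

lemma sat_min: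
  assumes "formula_satisfiable n cs"
  shows "\<exists>M\<subseteq>{1..n}. (\<forall>C\<in>set cs. clause_sat M C) \<and> (\<forall>i\<in>M. \<exists>S. (Some i, S) \<in> set cs \<and> S \<subseteq> M - {i})"
proof -
  let ?P = "\<lambda>A. A \<subseteq> {1..n} \<and> (\<forall>C\<in>set cs. clause_sat A C)"
  from assms obtain A where "?P A" unfolding formula_satisfiable_def by blast
  from ex_has_least_nat[of ?P A card, OF this] obtain M where
    M: "?P M" and min: "\<And>B. ?P B \<Longrightarrow> card M \<le> card B" by blast
  have fin: "finite M" using M finite_subset by blast
  have "\<exists>S. (Some i, S) \<in> set cs \<and> S \<subseteq> M - {i}" if i: "i \<in> M" for i
  proof -
    have "card (M - {i}) < card M" using fin i by (meson card_Diff1_less)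
    then have "\<not> ?P (M - {i})"
    proof (intro notI)
      assume l: "card (M - {i}) < card M" and p: "?P (M - {i})"
      from min[OF p] l show False by simp
    qed
    then obtain C where C: "C \<in> set cs" "\<not> clause_sat (M - {i}) C" using M by blast
    obtain P S where PS: "C = (P, S)" by force
    have sat: "clause_sat M C" using M C by blast
    from C(2) have S: "S \<subseteq> M - {i}" and P: "\<And>j. P = Some j \<Longrightarrow> j \<notin> M - {i}"
      unfolding clause_sat_def PS by auto
    from sat S obtain j where "P = Some j" "j \<in> M" unfolding clause_sat_def PS by auto
    with P have "P = Some i" by auto
    then show ?thesis using C(1) PS S by blast
  qed
  then show ?thesis using M by blast
qed

definition Gs :: "nat \<Rightarrow> nat set \<Rightarrow> horn_clause set" where
  "Gs n M = {C \<in> horn_clauses n. clause_sat M C}"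

definition Ts :: "nat set \<Rightarrow> horn_clause set" where
  "Ts M = (\<Union>i\<in>M. (\<lambda>S. (Some i, S)) ` Pow (M - {i}))"

lemma card_Ts: assumes "finite M" shows "card (Ts M) \<le> card M * 2^(card M - 1)"
proof -
  have "card (Ts M) \<le> (\<Sum>i\<in>M. card ((\<lambda>S. (Some i, S)) ` Pow (M - {i})))"
    unfolding Ts_def by (rule card_UN_le[OF assms])
  also have "\<dots> \<le> (\<Sum>i\<in>M. 2^(card M - 1))"
  proof (rule sum_mono)
    fix i assume "i \<in> M"
    have "card ((\<lambda>S. (Some i, S)) ` Pow (M - {i})) \<le> card (Pow (M - {i}))" by (rule card_image_le) (use assms in auto)
    also have "\<dots> = 2^(card M - 1)" using assms \<open>i \<in> M\<close> by (simp add: card_Pow)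
    finally show "card ((\<lambda>S. (Some i, S)) ` Pow (M - {i})) \<le> 2^(card M - 1)" .
  qed
  finally show ?thesis by simp
qed

lemma Ts_sub: "M \<subseteq> {1..n} \<Longrightarrow> Ts M \<subseteq> Gs n M"
  unfolding Ts_def Gs_def horn_clauses_def clause_sat_def by auto

definition bnum :: "nat \<Rightarrow> nat \<Rightarrow> nat" where
  "bnum n k = (n - k) * 2^k + (2^k - 1)"

lemma card_Gs: assumes M: "M \<subseteq> {1..n}" shows "card (Gs n M) \<le> card (horn_clauses n) - bnum n (card M)"
proof -
  define B1 where "B1 = (\<lambda>(j,S). (Some j, S)) ` (({1..n} - M) \<times> Pow M)"
  define B2 where "B2 = (\<lambda>S. (None::nat option, S)) ` (Pow M - {{}})"
  have fM: "finite M" using M finite_subset by blast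
  have cd0: "card ({1..n} - M) = card {1..n} - card M" by (rule card_Diff_subset[OF fM M])
  have cd: "card ({1..n} - M) = n - card M" using cd0 by (metis card_atLeastAtMost diff_Suc_1)
  have cd': "card ({Suc 0..n} - M) = n - card M" using cd by simp
  have c1: "card B1 = (n - card M) * 2^(card M)"
    unfolding B1_def
    by (subst card_image) (auto simp: inj_on_def card_cartesian_product card_Pow fM cd')
  have c2: "card B2 = 2^(card M) - 1"
    unfolding B2_def
    by (subst card_image) (auto simp: inj_on_def card_Pow fM)
  have d: "B1 \<inter> B2 = {}" unfolding B1_def B2_def by auto
  have cB: "card (B1 \<union> B2) = bnum n (card M)"
    unfolding bnum_def using c1 c2 d by (subst card_Un_disjoint) (auto simp: B1_def B2_def fM)
  have sub: "B1 \<union> B2 \<subseteq> horn_clauses n" unfolding B1_def B2_def horn_clauses_def using M by auto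
  have "Gs n M \<subseteq> horn_clauses n - (B1 \<union> B2)"
    unfolding Gs_def B1_def B2_def clause_sat_def by auto
  then have "card (Gs n M) \<le> card (horn_clauses n - (B1 \<union> B2))"
    by (intro card_mono) (auto simp: finite_H)
  also have "\<dots> = card (horn_clauses n) - bnum n (card M)"
    using sub cB by (subst card_Diff_subset) (auto intro: finite_subset[OF _ finite_H])
  finally show ?thesis .
qed


lemma card_lists_pos:
  assumes "\<And>p. p < m \<Longrightarrow> finite (A p)"
  shows "card {xs. length xs = m \<and> (\<forall>p<m. xs!p \<in> A p)} = (\<Prod>p<m. card (A p))"
  using assms
proof (induction m arbitrary: A)
  case 0
  then show ?case by simp
next
  case (Suc m)
  let ?S = "{xs. length xs = m \<and> (\<forall>p<m. xs!p \<in> A (Suc p))}"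
  have eq: "{xs. length xs = Suc m \<and> (\<forall>p<Suc m. xs!p \<in> A p)} = (\<lambda>(x,xs). x#xs) ` (A 0 \<times> ?S)"
  proof (rule set_eqI, rule iffI)
    fix xs assume "xs \<in> {xs. length xs = Suc m \<and> (\<forall>p<Suc m. xs!p \<in> A p)}"
    then obtain y ys where "xs = y # ys" "length ys = m" "\<forall>p<Suc m. xs!p \<in> A p"
      by (cases xs) auto
    then show "xs \<in> (\<lambda>(x,xs). x#xs) ` (A 0 \<times> ?S)"
      by (auto intro!: image_eqI[where x="(y,ys)"])
  next
    fix xs assume "xs \<in> (\<lambda>(x,xs). x#xs) ` (A 0 \<times> ?S)"
    then show "xs \<in> {xs. length xs = Suc m \<and> (\<forall>p<Suc m. xs!p \<in> A p)}"
      by (auto simp: less_Suc_eq_0_disj)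
  qed
  have "card {xs. length xs = Suc m \<and> (\<forall>p<Suc m. xs!p \<in> A p)} = card (A 0 \<times> ?S)"
    unfolding eq by (rule card_image) (auto simp: inj_on_def)
  also have "\<dots> = card (A 0) * card ?S" by (rule card_cartesian_product)
  also have "card ?S = (\<Prod>p<m. card (A (Suc p)))" using Suc by auto
  finally show ?case by (simp del: prod.lessThan_Suc add: prod.lessThan_Suc_shift)
qed

definition Es :: "nat \<Rightarrow> nat \<Rightarrow> nat set \<Rightarrow> horn_clause list set" where
  "Es n m M = {cs. length cs = m \<and> set cs \<subseteq> Gs n M \<and> (\<forall>i\<in>M. \<exists>S. (Some i, S) \<in> set cs \<and> S \<subseteq> M - {i})}"

lemma sat_sub: "{cs \<in> horn_formulas n m. formula_satisfiable n cs} \<subseteq> (\<Union>M\<in>Pow {1..n}. Es n m M)"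
proof
  fix cs assume "cs \<in> {cs \<in> horn_formulas n m. formula_satisfiable n cs}"
  then have hf: "cs \<in> horn_formulas n m" and s: "formula_satisfiable n cs" by auto
  from sat_min[OF s] obtain M where M: "M \<subseteq> {1..n}" "\<forall>C\<in>set cs. clause_sat M C"
    "\<forall>i\<in>M. \<exists>S. (Some i, S) \<in> set cs \<and> S \<subseteq> M - {i}" by blast
  have "cs \<in> Es n m M" using hf M unfolding Es_def Gs_def horn_formulas_def by auto
  then show "cs \<in> (\<Union>M\<in>Pow {1..n}. Es n m M)" using M(1) by blast
qed

lemma card_Es:
  assumes M: "M \<subseteq> {1..n}"
  shows "card (Es n m M) \<le> (m choose card M) * card (Ts M) ^ card M * card (Gs n M) ^ (m - card M)"
proof -
  define k where "k = card M"
  define L where "L P = {xs. length xs = m \<and> (\<forall>p<m. xs!p \<in> (if p \<in> P then Ts M else Gs n M))}" for P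
  define PP where "PP = {P. P \<subseteq> {..<m} \<and> card P = k}"
  have fG: "finite (Gs n M)" unfolding Gs_def using finite_H by auto
  have fT: "finite (Ts M)" using Ts_sub[OF M] fG finite_subset by blast
  have sub: "Es n m M \<subseteq> (\<Union>P\<in>PP. L P)"
  proof
    fix cs assume cs: "cs \<in> Es n m M"
    have all: "length cs = m \<and> set cs \<subseteq> Gs n M \<and> (\<forall>i\<in>M. \<exists>S. (Some i, S) \<in> set cs \<and> S \<subseteq> M - {i})"
      using cs unfolding Es_def by (rule CollectD)
    have len: "length cs = m" using all by (rule conjunct1)
    have G: "set cs \<subseteq> Gs n M" using all by (elim conjE)
    have W: "\<forall>i\<in>M. \<exists>S. (Some i, S) \<in> set cs \<and> S \<subseteq> M - {i}" using all by (elim conjE)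
    have ex: "\<forall>i\<in>M. \<exists>p. p < m \<and> fst (cs!p) = Some i \<and> snd (cs!p) \<subseteq> M - {i}"
    proof
      fix i assume "i \<in> M"
      with W obtain S where S1: "(Some i, S) \<in> set cs" and S2: "S \<subseteq> M - {i}" by blast
      from S1 obtain p where p1: "p < length cs" and p2: "cs!p = (Some i, S)"
        unfolding in_set_conv_nth by blast
      have "p < m \<and> fst (cs!p) = Some i \<and> snd (cs!p) \<subseteq> M - {i}" using p1 p2 S2 len by simp
      then show "\<exists>p. p < m \<and> fst (cs!p) = Some i \<and> snd (cs!p) \<subseteq> M - {i}" by (rule exI)
    qed
    obtain pos where posA: "\<forall>i\<in>M. pos i < m \<and> fst (cs!pos i) = Some i \<and> snd (cs!pos i) \<subseteq> M - {i}"
      using bchoice[OF ex] by (elim exE)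
    have posC: "pos i < m \<and> fst (cs!pos i) = Some i \<and> snd (cs!pos i) \<subseteq> M - {i}" if "i \<in> M" for i
      using posA that by (rule bspec)
    have pos1: "pos i < m" if "i \<in> M" for i using posC[OF that] by (rule conjunct1)
    have pos2: "fst (cs!pos i) = Some i" if "i \<in> M" for i using posC[OF that] by (elim conjE)
    have pos3: "snd (cs!pos i) \<subseteq> M - {i}" if "i \<in> M" for i using posC[OF that] by (elim conjE)
    have inj: "inj_on pos M"
    proof (rule inj_onI)
      fix i j assume ij: "i \<in> M" "j \<in> M" "pos i = pos j"
      have a: "fst (cs!pos i) = Some i" by (rule pos2[OF ij(1)])
      have b: "fst (cs!pos j) = Some j" by (rule pos2[OF ij(2)])
      have c: "fst (cs!pos i) = fst (cs!pos j)" using ij(3) by (rule arg_cong)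
      have "Some i = fst (cs!pos i)" using a by (rule sym)
      also have "\<dots> = fst (cs!pos j)" by (rule c)
      also have "\<dots> = Some j" by (rule b)
      finally have "Some i = Some j" .
      then show "i = j" by (rule option.inject[THEN iffD1])
    qed
    have PPm: "pos ` M \<in> PP" unfolding PP_def k_def
    proof (intro CollectI conjI)
      show "pos ` M \<subseteq> {..<m}" using pos1 by blast
      show "card (pos ` M) = card M" by (rule card_image[OF inj])
    qed
    have Lm: "cs \<in> L (pos ` M)"
    proof -
      have "cs!p \<in> (if p \<in> pos ` M then Ts M else Gs n M)" if "p < m" for p
      proof (cases "p \<in> pos ` M")
        case True
        then obtain i where i: "i \<in> M" "p = pos i" by blast
        obtain x y where xy: "cs!p = (x, y)" by (cases "cs!p")
        have x: "x = Some i" using pos2[OF i(1)] i(2) xy by simp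
        have y: "y \<in> Pow (M - {i})" using pos3[OF i(1)] i(2) xy by simp
        have "cs!p \<in> (\<lambda>S. (Some i, S)) ` Pow (M - {i})" using xy x y by blast
        then have "cs!p \<in> Ts M" unfolding Ts_def using i(1) by blast
        then show ?thesis using True by simp
      next
        case False
        have "cs!p \<in> set cs" using that len by simp
        then have "cs!p \<in> Gs n M" using G by blast
        then show ?thesis using False by simp
      qed
      then show ?thesis unfolding L_def using len by blast
    qed
    show "cs \<in> (\<Union>P\<in>PP. L P)" using PPm Lm by blast
  qed
  have cardL: "card (L P) = card (Ts M) ^ k * card (Gs n M) ^ (m - k)" if "P \<in> PP" for P
  proof -
    have P: "P \<subseteq> {..<m}" "card P = k" using that unfolding PP_def by auto
    have "card (L P) = (\<Prod>p<m. card (if p \<in> P then Ts M else Gs n M))"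
      unfolding L_def by (rule card_lists_pos) (use fG fT in auto)
    also have "\<dots> = (\<Prod>p<m. if p \<in> P then card (Ts M) else card (Gs n M))"
      by (rule prod.cong) auto
    also have "\<dots> = (\<Prod>p\<in>{..<m} \<inter> {p. p \<in> P}. card (Ts M)) * (\<Prod>p\<in>{..<m} \<inter> - {p. p \<in> P}. card (Gs n M))"
      by (rule prod.If_cases) simp
    also have "\<dots> = card (Ts M) ^ card ({..<m} \<inter> {p. p \<in> P}) * card (Gs n M) ^ card ({..<m} \<inter> - {p. p \<in> P})"
      by (simp only: prod_constant)
    also have "{..<m} \<inter> {p. p \<in> P} = P" using P by auto
    also have "card ({..<m} \<inter> - {p. p \<in> P}) = m - k"
    proof -
      have e: "{..<m} \<inter> - {p. p \<in> P} = {..<m} - P" by auto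
      have "card ({..<m} - P) = card {..<m} - card P" using P(1) finite_subset[OF P(1)] by (intro card_Diff_subset) auto
      then show ?thesis unfolding e using P by simp
    qed
    finally show ?thesis using P by simp
  qed
  have finL: "finite (L P)" for P
  proof -
    have "L P \<subseteq> {xs. set xs \<subseteq> horn_clauses n \<and> length xs = m}"
    proof
      fix xs assume xs: "xs \<in> L P"
      have "x \<in> horn_clauses n" if "x \<in> set xs" for x
      proof -
        obtain p where p: "p < length xs" "x = xs!p" using \<open>x \<in> set xs\<close> by (metis in_set_conv_nth)
        then have "x \<in> (if p \<in> P then Ts M else Gs n M)" using xs unfolding L_def by auto
        moreover have "Ts M \<subseteq> horn_clauses n" "Gs n M \<subseteq> horn_clauses n"
          using Ts_sub[OF M] unfolding Gs_def by auto
        ultimately show ?thesis by (auto split: if_splits)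
      qed
      then show "xs \<in> {xs. set xs \<subseteq> horn_clauses n \<and> length xs = m}" using xs unfolding L_def by auto
    qed
    then show ?thesis using finite_lists_length_eq[OF finite_H] finite_subset by blast
  qed
  have finPP: "finite PP" unfolding PP_def by auto
  have "card (Es n m M) \<le> card (\<Union>P\<in>PP. L P)"
    by (rule card_mono) (use sub finPP finL in auto)
  also have "\<dots> \<le> (\<Sum>P\<in>PP. card (L P))" by (rule card_UN_le[OF finPP])
  also have "\<dots> = (\<Sum>P\<in>PP. card (Ts M) ^ k * card (Gs n M) ^ (m - k))"
    by (rule sum.cong) (auto simp: cardL)
  also have "\<dots> = card PP * (card (Ts M) ^ k * card (Gs n M) ^ (m - k))" by simp
  also have "card PP = m choose k" unfolding PP_def using n_subsets[of "{..<m}" k] by simp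
  finally show ?thesis unfolding k_def by simp
qed

lemma Es_sub: "M \<subseteq> {1..n} \<Longrightarrow> Es n m M \<subseteq> horn_formulas n m"
  unfolding Es_def horn_formulas_def Gs_def by auto

lemma card_H_le: "card (horn_clauses n) \<le> (n+1)*2^n"
  unfolding card_H by (rule diff_le_self)

lemma card_H_pos: "n \<ge> 1 \<Longrightarrow> card (horn_clauses n) > 0"
proof -
  assume n: "n \<ge> 1"
  have "2 * 1 \<le> (n+1)*2^n" by (rule mult_le_mono) (use n in auto)
  moreover have "\<forall>x::nat. 2 \<le> x \<longrightarrow> 0 < x - 1" by simp
  ultimately show ?thesis unfolding card_H by simp
qed

lemma upper_count:
  "card {cs \<in> horn_formulas n m. formula_satisfiable n cs} \<le>
   (\<Sum>k\<le>n. (n choose k) * ((m choose k) * (k*2^(k-1))^k * (card (horn_clauses n) - bnum n k)^(m-k)))"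
proof -
  define g where "g k = (m choose k) * (k*2^(k-1))^k * (card (horn_clauses n) - bnum n k)^(m-k)" for k
  have fin: "finite (\<Union>M\<in>Pow {1..n}. Es n m M)"
  proof (rule finite_UN_I)
    show "finite (Pow {1..n})" by simp
    fix M assume "M \<in> Pow {1..n}"
    then have "M \<subseteq> {1..n}" by simp
    then show "finite (Es n m M)" by (rule finite_subset[OF Es_sub finite_hf])
  qed
  have "card {cs \<in> horn_formulas n m. formula_satisfiable n cs} \<le> card (\<Union>M\<in>Pow {1..n}. Es n m M)"
    by (rule card_mono[OF fin sat_sub])
  also have "\<dots> \<le> (\<Sum>M\<in>Pow {1..n}. card (Es n m M))" by (rule card_UN_le) simp
  also have "\<dots> \<le> (\<Sum>M\<in>Pow {1..n}. g (card M))"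
  proof (rule sum_mono)
    fix M assume "M \<in> Pow {1..n}"
    then have M: "M \<subseteq> {1..n}" by simp
    have fM: "finite M" using M finite_subset by blast
    have "card (Es n m M) \<le> (m choose card M) * card (Ts M) ^ card M * card (Gs n M) ^ (m - card M)"
      by (rule card_Es[OF M])
    also have "\<dots> \<le> g (card M)"
    proof -
      have t1: "card (Ts M)^card M \<le> (card M * 2^(card M - 1))^card M" by (rule power_mono[OF card_Ts[OF fM]]) simp
      have t2: "card (Gs n M)^(m - card M) \<le> (card (horn_clauses n) - bnum n (card M))^(m - card M)"
        by (rule power_mono[OF card_Gs[OF M]]) simp
      show ?thesis unfolding g_def by (rule mult_le_mono[OF mult_le_mono2[OF t1] t2])
    qed
    finally show "card (Es n m M) \<le> g (card M)" .
  qed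
  also have "\<dots> = (\<Sum>k\<le>n. (\<Sum>M\<in>{M \<in> Pow {1..n}. card M = k}. g (card M)))"
  proof (rule sum.group[symmetric])
    show "finite (Pow {1..n})" by simp
    show "finite {..n}" by simp
    show "card ` Pow {1..n} \<subseteq> {..n}"
    proof
      fix x assume "x \<in> card ` Pow {1..n}"
      then obtain M where M: "M \<subseteq> {1..n}" "x = card M" by blast
      have "card M \<le> card {1..n}" by (rule card_mono[OF _ M(1)]) simp
      then show "x \<in> {..n}" using M(2) by simp
    qed
  qed
  also have "\<dots> = (\<Sum>k\<le>n. (n choose k) * g k)"
  proof (rule sum.cong[OF refl])
    fix k assume "k \<in> {..n}"
    have "(\<Sum>M\<in>{M \<in> Pow {1..n}. card M = k}. g (card M)) = (\<Sum>M\<in>{M \<in> Pow {1..n}. card M = k}. g k)"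
      by (rule sum.cong) simp_all
    also have "\<dots> = card {M \<in> Pow {1..n}. card M = k} * g k" by simp
    also have "card {M \<in> Pow {1..n}. card M = k} = n choose k"
    proof -
      have setEq: "{M \<in> Pow {1..n}. card M = k} = {B. B \<subseteq> {1..n} \<and> card B = k}" by auto
      show ?thesis unfolding setEq using n_subsets[of "{1..n}" k] by simp
    qed
    finally show "(\<Sum>M\<in>{M \<in> Pow {1..n}. card M = k}. g (card M)) = (n choose k) * g k" .
  qed
  finally show ?thesis unfolding g_def .
qed

lemma lower_count:
  "(card (horn_clauses n) - n) ^ m \<le> card {cs \<in> horn_formulas n m. formula_satisfiable n cs}"
proof -
  define PU where "PU = (\<lambda>i. (Some i, {}::nat set)) ` {1..n}"
  have PUs: "PU \<subseteq> horn_clauses n" unfolding PU_def horn_clauses_def by auto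
  have cPU: "card PU = n" unfolding PU_def by (subst card_image) (auto simp: inj_on_def)
  have fD: "finite (horn_clauses n - PU)" using finite_H by auto
  have "{cs. set cs \<subseteq> horn_clauses n - PU \<and> length cs = m} \<subseteq> {cs \<in> horn_formulas n m. formula_satisfiable n cs}"
  proof
    fix cs assume cs: "cs \<in> {cs. set cs \<subseteq> horn_clauses n - PU \<and> length cs = m}"
    have "clause_sat {} C" if "C \<in> set cs" for C
    proof -
      obtain P S where C: "C = (P, S)" by force
      have "C \<in> horn_clauses n" "C \<notin> PU" using cs that by auto
      then have "S \<noteq> {}" unfolding C horn_clauses_def PU_def by auto
      then show ?thesis unfolding clause_sat_def C by auto
    qed
    then have "formula_satisfiable n cs" unfolding formula_satisfiable_def by blast
    then show "cs \<in> {cs \<in> horn_formulas n m. formula_satisfiable n cs}"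
      using cs unfolding horn_formulas_def by auto
  qed
  then have "card {cs. set cs \<subseteq> horn_clauses n - PU \<and> length cs = m} \<le> card {cs \<in> horn_formulas n m. formula_satisfiable n cs}"
    by (intro card_mono) (auto simp: finite_hf)
  moreover have "card {cs. set cs \<subseteq> horn_clauses n - PU \<and> length cs = m} = (card (horn_clauses n) - n) ^ m"
    using card_lists_length_eq[OF fD] card_Diff_subset[OF finite_subset[OF PUs finite_H] PUs] cPU by simp
  ultimately show ?thesis by simp
qed

lemma prob_le1: "prob_sat n m \<le> 1"
proof -
  have "card {cs \<in> horn_formulas n m. formula_satisfiable n cs} \<le> card (horn_formulas n m)"
    by (rule card_mono[OF finite_hf]) auto
  then show ?thesis unfolding prob_sat_def
    by (cases "card (horn_formulas n m) = 0") (auto simp: divide_le_eq_1)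
qed

lemma bnum_le: "k \<le> n \<Longrightarrow> bnum n k \<le> card (horn_clauses n)"
proof -
  assume k: "k \<le> n"
  have "bnum n k \<le> (n - k) * 2^k + 2^k - 1" unfolding bnum_def by simp
  also have "\<dots> \<le> (n+1)*2^n - 1"
  proof -
    have "(n - k) * 2^k + 2^k = (n - k + 1) * 2^k" by simp
    also have "\<dots> \<le> (n+1) * 2^n" by (intro mult_le_mono) (use k in auto)
    finally show ?thesis by simp
  qed
  finally show ?thesis by (simp add: card_H)
qed

lemma prob_upper:
  assumes "n \<ge> 1"
  shows "prob_sat n m \<le> (\<Sum>k\<le>n. real (n choose k) * real (m choose k) * (real k*2^(k-1))^k *
            (real (card (horn_clauses n)) - real (bnum n k))^(m-k) / real (card (horn_clauses n))^m)"
proof -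
  let ?N = "card (horn_clauses n)"
  have Npos: "?N > 0" using card_H_pos[OF assms] .
  have "real (card {cs \<in> horn_formulas n m. formula_satisfiable n cs}) \<le>
    real (\<Sum>k\<le>n. (n choose k) * ((m choose k) * (k*2^(k-1))^k * (?N - bnum n k)^(m-k)))"
    using upper_count by (simp only: of_nat_le_iff)
  also have "\<dots> = (\<Sum>k\<le>n. real (n choose k) * real (m choose k) * (real k*2^(k-1))^k * (real ?N - real (bnum n k))^(m-k))"
    by (simp add: of_nat_diff bnum_le mult.assoc)
  finally have le: "real (card {cs \<in> horn_formulas n m. formula_satisfiable n cs}) \<le> \<dots>" .
  show ?thesis unfolding prob_sat_def card_hf
    using divide_right_mono[OF le, of "real ?N ^ m"] by (simp add: sum_divide_distrib)
qed

lemma prob_lower: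
  assumes "n \<ge> 1"
  shows "((real (card (horn_clauses n)) - real n) / real (card (horn_clauses n))) ^ m \<le> prob_sat n m"
proof -
  let ?N = "card (horn_clauses n)"
  have nN: "n \<le> ?N" using bnum_le[of 0 n] by (simp add: bnum_def)
  have "real ((?N - n)^m) \<le> real (card {cs \<in> horn_formulas n m. formula_satisfiable n cs})"
    using lower_count by (simp only: of_nat_le_iff)
  then have "(real ?N - real n)^m \<le> real (card {cs \<in> horn_formulas n m. formula_satisfiable n cs})"
    using nN by (simp add: of_nat_diff)
  then show ?thesis unfolding prob_sat_def card_hf
    by (simp add: power_divide divide_right_mono)
qed

lemma choose_le_pow_real: "real (n choose k) \<le> real n ^ k"
proof (cases "k \<le> n")
  case True then show ?thesis using binomial_le_pow[OF True] by (metis of_nat_le_iff of_nat_power)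
next
  case False then show ?thesis using False by (simp add: binomial_eq_0 not_le)
qed

lemma term_bound:
  fixes n m k :: nat and N b c T :: real
  assumes N: "N > 0" and b: "0 \<le> b" "b \<le> N" and km: "k \<le> m" and nm: "real n * real m \<le> c * N"
    and T: "0 \<le> T" and c: "c \<ge> 0"
  shows "real (n choose k) * real (m choose k) * T^k * (N - b)^(m-k) / N^m \<le> (c*T)^k * exp (- (b * (real m - real k) / N))"
proof -
  have Nb: "0 \<le> N - b" using b by simp
  have "real (n choose k) * real (m choose k) * T^k * (N - b)^(m-k) / N^m \<le> real n ^ k * real m ^ k * T^k * (N - b)^(m-k) / N^m"
  proof -
    have a: "real (n choose k) * real (m choose k) \<le> real n ^ k * real m ^ k"
      by (rule mult_mono[OF choose_le_pow_real choose_le_pow_real]) auto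
    have p: "0 \<le> T^k * (N - b)^(m-k)" using T Nb by simp
    have "real (n choose k) * real (m choose k) * (T^k * (N - b)^(m-k)) \<le> real n ^ k * real m ^ k * (T^k * (N - b)^(m-k))"
      by (rule mult_right_mono[OF a p])
    then have "real (n choose k) * real (m choose k) * (T^k * (N - b)^(m-k)) / N^m \<le> real n ^ k * real m ^ k * (T^k * (N - b)^(m-k)) / N^m"
      by (rule divide_right_mono) (use N in simp)
    then show ?thesis by (simp only: mult.assoc)
  qed
  also have "\<dots> = (real n * real m / N * T)^k * ((N - b)/N)^(m-k)"
  proof -
    have e: "N^m = N^k * N^(m-k)" using km by (simp add: power_add[symmetric])
    show ?thesis unfolding e by (simp add: power_mult_distrib power_divide)
  qed
  also have "\<dots> \<le> (c*T)^k * exp (- b / N)^(m-k)"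
  proof -
    have 1: "real n * real m / N * T \<le> c * T" using nm N T by (intro mult_right_mono) (auto simp: divide_le_eq)
    have 2: "0 \<le> real n * real m / N * T" using N T by simp
    have "1 + (- b/N) \<le> exp (- b/N)" by (rule exp_ge_add_one_self)
    then have 3: "(N - b)/N \<le> exp (- b / N)" using N by (simp add: diff_divide_distrib)
    have 4: "0 \<le> (N - b)/N" using Nb N by simp
    have 5: "0 \<le> (c*T)^k" using c T by simp
    have A: "(real n * real m / N * T)^k \<le> (c*T)^k" by (rule power_mono[OF 1 2])
    have B: "((N - b)/N)^(m-k) \<le> exp (- b / N)^(m-k)" by (rule power_mono[OF 3 4])
    have P: "0 \<le> ((N - b)/N)^(m-k)" using 4 by (rule zero_le_power)
    show ?thesis by (rule mult_mono[OF A B 5 P])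
  qed
  also have "exp (- b / N)^(m-k) = exp (real (m-k) * (- b / N))"
    by (simp only: exp_of_nat_mult)
  also have "real (m-k) * (- b / N) = - (b * (real m - real k) / N)"
    using km by (simp add: of_nat_diff)
  finally show ?thesis .
qed

lemma c_le_exp: "c \<le> exp (c/2)" for c :: real
proof (cases "c \<le> 0")
  case True then show ?thesis using exp_gt_zero[of "c/2"] by linarith
next
  case False
  have e: "(1 + c/4)^2 - c = (1 - c/4)^2" by (simp add: power2_eq_square algebra_simps)
  have "0 \<le> (1 - c/4)^2" by simp
  then have "c \<le> (1 + c/4)^2" using e by linarith
  also have "\<dots> \<le> exp (c/4)^2" using False by (intro power_mono exp_ge_add_one_self) auto
  also have "exp (c/4)^2 = exp (c/2)" by (simp add: exp_of_nat_mult[symmetric])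
  finally show ?thesis .
qed

lemma k_le_pow: "k \<ge> 1 \<Longrightarrow> real k \<le> 2^(k-1)"
proof -
  assume "k \<ge> 1"
  then obtain i where k: "k = Suc i" by (cases k) auto
  have "k \<le> 2^(k-1)" using less_exp[of i] k Suc_le_eq by auto
  then show ?thesis by (metis of_nat_le_iff of_nat_numeral of_nat_power)
qed

lemma key:
  fixes c E :: real and k :: nat
  assumes c: "c > 0" and two: "2 \<le> exp (c/4)" and k: "k \<ge> 1" and E: "c * (2*real k^2 + real k + 3) / 4 \<le> E"
  shows "(c * k * 2^(k-1))^k * exp (- E) \<le> 2 * exp (- c) * (1/2)^k"
proof -
  obtain i where ki: "k = Suc i" using k by (cases k) auto
  define j where "j = 2*i*(Suc i) + i"
  have jr: "real j = 2*real i^2 + 3 * real i" unfolding j_def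
    by (simp add: power2_eq_square algebra_simps)
  have kk: "real k \<le> 2^i" using k_le_pow[OF k] ki by simp
  have "c * k * 2^i \<le> exp (c/2) * 2^i * 2^i"
  proof (rule mult_right_mono)
    show "c * k \<le> exp (c/2) * 2^i" by (rule mult_mono[OF c_le_exp kk]) (use c in auto)
  qed simp
  also have "exp (c/2) * 2^i * 2^i = exp (c/2) * 2^(2*i)"
    by (simp add: mult_2 power_add mult.assoc)
  finally have b1: "c * k * 2^i \<le> exp (c/2) * 2^(2*i)" .
  have c0: "0 \<le> c * k * 2^i" using c by simp
  have "(c * k * 2^i)^k * 2^i \<le> (exp (c/2) * 2^(2*i))^k * 2^i"
    by (rule mult_right_mono[OF power_mono[OF b1 c0]]) simp
  also have "(exp (c/2) * 2^(2*i))^k * 2^i = exp (c/2)^k * (2^(2*i))^k * 2^i" by (simp only: power_mult_distrib)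
  also have "((2::real)^(2*i))^k = 2^(2*i*k)" by (simp only: power_mult)
  also have "exp (c/2)^k * 2^(2*i*k) * 2^i = exp (c/2)^k * 2^j" unfolding j_def ki
    by (simp only: power_add mult.assoc)
  also have "exp (c/2)^k * (2::real)^j \<le> exp (c/2)^k * exp (c/4)^j"
    by (rule mult_left_mono[OF power_mono[OF two]]) auto
  also have "exp (c/2)^k * exp (c/4)^j = exp (real k * (c/2)) * exp (real j * (c/4))"
    by (simp only: exp_of_nat_mult)
  also have "\<dots> = exp (real k * (c/2) + real j * (c/4))"
    by (simp only: exp_add)
  finally have b2: "(c * k * 2^i)^k * 2^i \<le> exp (real k * (c/2) + real j * (c/4))" .
  have ex: "real k * (c/2) + real j * (c/4) + c = c * (2*real k^2 + real k + 3) / 4" unfolding jr ki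
    by (simp add: field_simps power2_eq_square)
  have "(c * k * 2^i)^k * 2^i * exp c \<le> exp (real k * (c/2) + real j * (c/4)) * exp c"
    by (rule mult_right_mono[OF b2]) simp
  also have "\<dots> = exp (real k * (c/2) + real j * (c/4) + c)" by (simp only: exp_add)
  also have "\<dots> = exp (c * (2*real k^2 + real k + 3) / 4)" by (simp only: ex)
  also have "\<dots> \<le> exp E" using E by simp
  finally have b3: "(c * k * 2^i)^k * 2^i * exp c \<le> exp E" .
  have "(c * k * 2^i)^k * exp (- E) = ((c * k * 2^i)^k * 2^i * exp c) * (exp (-E) * exp (-c) / 2^i)"
    by (simp add: exp_minus)
  also have "\<dots> \<le> exp E * (exp (-E) * exp (-c) / 2^i)" by (rule mult_right_mono[OF b3]) simp
  also have "\<dots> = exp (-c) / 2^i" by (simp add: exp_minus)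
  also have "\<dots> = 2 * exp (- c) * (1/2)^k" unfolding ki by (simp add: power_one_over)
  finally show ?thesis using ki by simp
qed

lemma poly_exp6: "k \<ge> 6 \<Longrightarrow> 5 * (2*k^2 + k + 3) \<le> 8 * (2::nat)^k"
proof (induction k rule: dec_induct)
  case base then show ?case by simp
next
  case (step k)
  have e: "5 * (2*(Suc k)^2 + Suc k + 3) = 5 * (2*k^2 + k + 3) + 20*k + 15" by (simp add: power2_eq_square)
  have q: "6*k \<le> k^2" unfolding power2_eq_square by (rule mult_le_mono1[OF step.hyps(1)])
  have h: "20*k + 15 \<le> 5 * (2*k^2 + k + 3)"
  proof -
    have ex: "5 * (2*k^2 + k + 3) = 10*k^2 + 5*k + 15" by simp
    show ?thesis unfolding ex using q by linarith
  qed
  have p: "8 * (2::nat)^(Suc k) = 2 * (8 * 2^k)" by simp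
  show ?case unfolding e p using step.IH h by linarith
qed

lemma expo:
  fixes n m k :: nat and c :: real
  assumes c: "c > 0" and m: "c * 2^n - 1 \<le> real m"
    and n119: "n \<ge> 119" and h2: "120 \<le> c * 2^n" and h3: "10 * (real n + 1) \<le> c * 2^n"
    and h4: "100 * real n^4 * (real n + 1)^2 \<le> 81 * 2^n / 2"
    and k1: "1 \<le> k" and kn: "k \<le> n"
  shows "c * (2*real k^2 + real k + 3) / 4 \<le> real (bnum n k) * (real m - real k) / real (card (horn_clauses n))"
proof -
  define A :: real where "A = 2^n"
  define K :: real where "K = 2^k"
  define N where "N = real (card (horn_clauses n))"
  define b where "b = real (bnum n k)"
  have Apos: "A > 0" unfolding A_def by simp
  have "(2::real)^1 \<le> 2^k" by (rule power_increasing) (use k1 in auto)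
  then have K1: "K \<ge> 2" unfolding K_def by simp
  have "real (card (horn_clauses n)) \<le> real ((n+1)*2^n)" using card_H_le by (simp only: of_nat_le_iff)
  then have NA: "N \<le> (real n + 1) * A" unfolding N_def A_def by (simp add: algebra_simps)
  have Npos: "N > 0" unfolding N_def using card_H_pos[of n] n119 by simp
  have p1: "(1::nat) \<le> 2^k" by simp
  have "real (bnum n k) = real (n-k) * real (2^k) + real (2^k - 1)" by (simp only: bnum_def of_nat_add of_nat_mult)
  also have "\<dots> = (real n - real k) * 2^k + (2^k - 1)"
    by (simp only: of_nat_diff[OF kn] of_nat_diff[OF p1] of_nat_power of_nat_numeral of_nat_1)
  finally have bdef: "b = (real n - real k) * K + K - 1" unfolding b_def K_def by simp
  have mk: "real m - real k \<ge> c * A - 1 - real n" using m kn unfolding A_def by simp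
  have mk9: "real m - real k \<ge> 0.9 * c * A" using mk h3 unfolding A_def by simp
  have nkK: "(real n - real k) * K \<ge> 0" using kn K1 by simp
  have b0: "b \<ge> 0" using bdef nkK K1 by linarith
  have "0 \<le> 0.9 * c * A" using c Apos by simp
  then have mk0: "real m - real k \<ge> 0" using mk9 by linarith
  have E1: "b * (real m - real k) / ((real n + 1) * A) \<le> b * (real m - real k) / N"
  proof (rule divide_left_mono[OF NA])
    show "0 \<le> b * (real m - real k)" using b0 mk0 by simp
    have "0 < (real n + 1) * A" using Apos by simp
    then show "0 < (real n + 1) * A * N" using Npos by simp
  qed
  have D: "(real n + 1) * A > 0" using Apos by simp
  have goal: "c * (2*real k^2 + real k + 3) / 4 \<le> b * (real m - real k) / ((real n + 1) * A)"
  proof (cases "k \<le> 5")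
    case True
    have "(real n - 5) * K \<le> (real n - real k) * K" by (rule mult_right_mono) (use True K1 in auto)
    then have bb: "b \<ge> (real n - 5) * K" using bdef K1 by linarith
    have mm: "real m - real k \<ge> 0.95 * c * A" using m True h2 unfolding A_def by simp
    have X: "b * (real m - real k) \<ge> ((real n - 5) * K) * (0.95 * c * A)"
      by (rule mult_mono[OF bb mm]) (use b0 n119 K1 c Apos in auto)
    have t: "0.9 * c * K * ((real n + 1) * A) \<le> ((real n - 5) * K) * (0.95 * c * A)"
    proof -
      have "0.9 * c * K * ((real n + 1) * A) = (c*K*A) * (0.9 * (real n + 1))" by (simp add: algebra_simps)
      also have "\<dots> \<le> (c*K*A) * (0.95 * (real n - 5))"
        by (rule mult_left_mono) (use n119 c K1 Apos in auto)
      also have "\<dots> = ((real n - 5) * K) * (0.95 * c * A)" by (simp add: algebra_simps)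
      finally show ?thesis .
    qed
    have F1: "0.9 * c * K \<le> b * (real m - real k) / ((real n + 1) * A)"
        unfolding pos_le_divide_eq[OF D] by (rule order_trans[OF t X])
    have F2: "c * ((2*real k^2 + real k + 3) / 4) \<le> c * (0.9 * K)"
    proof (rule mult_left_mono[OF _ less_imp_le[OF c]])
      have "k = 1 \<or> k = 2 \<or> k = 3 \<or> k = 4 \<or> k = 5" using True k1 by auto
      then show "(2*real k^2 + real k + 3) / 4 \<le> 0.9 * K" unfolding K_def by auto
    qed
    have e1: "c * (2*real k^2 + real k + 3) / 4 = c * ((2*real k^2 + real k + 3) / 4)" by simp
    have e2: "c * (0.9 * K) = 0.9 * c * K" by simp
    show ?thesis using F1 F2 e1 e2 by linarith
  next
    case False
    show ?thesis
    proof (cases "2 * k \<le> n")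
      case True
      have "real (2*k) \<le> real n" using True by (simp only: of_nat_le_iff)
      then have "(real n / 2) * K \<le> (real n - real k) * K" by (intro mult_right_mono) (use K1 in auto)
      then have bb: "b \<ge> (real n / 2) * K" using bdef K1 by linarith
      have X: "b * (real m - real k) \<ge> ((real n / 2) * K) * (0.9 * c * A)"
        by (rule mult_mono[OF bb mk9]) (use b0 K1 c Apos in auto)
      have t: "0.4 * c * K * ((real n + 1) * A) \<le> ((real n / 2) * K) * (0.9 * c * A)"
      proof -
        have "0.4 * c * K * ((real n + 1) * A) = (c*K*A) * (0.4 * (real n + 1))" by (simp add: algebra_simps)
        also have "\<dots> \<le> (c*K*A) * (0.45 * real n)"
          by (rule mult_left_mono) (use n119 c K1 Apos in auto)
        also have "\<dots> = ((real n / 2) * K) * (0.9 * c * A)" by (simp add: algebra_simps)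
        finally show ?thesis .
      qed
      have F1: "0.4 * c * K \<le> b * (real m - real k) / ((real n + 1) * A)"
        unfolding pos_le_divide_eq[OF D] by (rule order_trans[OF t X])
      have F2: "c * ((2*real k^2 + real k + 3) / 4) \<le> c * (0.4 * K)"
      proof (rule mult_left_mono[OF _ less_imp_le[OF c]])
        have "k \<ge> 6" using False by simp
        then have "5 * (2*k^2 + k + 3) \<le> 8 * (2::nat)^k" by (rule poly_exp6)
        then have "real (5 * (2*k^2 + k + 3)) \<le> real (8 * (2::nat)^k)" by (simp only: of_nat_le_iff)
        then have "5 * (2*real k^2 + real k + 3) \<le> 8 * 2^k" by simp
        then show "(2*real k^2 + real k + 3) / 4 \<le> 0.4 * K" unfolding K_def by simp
      qed
      have e1: "c * (2*real k^2 + real k + 3) / 4 = c * ((2*real k^2 + real k + 3) / 4)" by simp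
    have e2: "c * (0.4 * K) = 0.4 * c * K" by simp
    show ?thesis using F1 F2 e1 e2 by linarith
    next
      case False2: False
      have bb: "b \<ge> K / 2" using bdef nkK K1 by linarith
      have X: "b * (real m - real k) \<ge> (K / 2) * (0.9 * c * A)"
        by (rule mult_mono[OF bb mk9]) (use b0 K1 c Apos in auto)
      have KK: "K * K \<ge> 2 * A"
      proof -
        have "n + 1 \<le> k + k" using False2 by simp
        then have "(2::real)^(n+1) \<le> 2^(k+k)" by (rule power_increasing) simp
        then show ?thesis unfolding K_def A_def by (simp add: power_add)
      qed
      have sq: "(real n^2 * (real n + 1))^2 \<le> (0.45 * K)^2"
      proof -
        have "(real n^2 * (real n + 1))^2 = real n^4 * (real n + 1)^2" by (simp add: power_mult_distrib power_mult[symmetric])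
        also have "\<dots> \<le> 0.405 * A" using h4 unfolding A_def by simp
        also have "\<dots> \<le> 0.2025 * (K * K)" using KK by simp
        also have "\<dots> = (0.45 * K)^2" by (simp add: power2_eq_square)
        finally show ?thesis .
      qed
      have n2: "real n^2 * (real n + 1) \<le> 0.45 * K"
        by (rule power2_le_imp_le[OF sq]) (use K1 in simp)
      have t: "c * real n^2 * ((real n + 1) * A) \<le> (K / 2) * (0.9 * c * A)"
      proof -
        have "c * real n^2 * ((real n + 1) * A) = (c*A) * (real n^2 * (real n + 1))" by (simp add: algebra_simps)
        also have "\<dots> \<le> (c*A) * (0.45 * K)" by (rule mult_left_mono[OF n2]) (use c Apos in simp)
        also have "\<dots> = (K / 2) * (0.9 * c * A)" by (simp add: algebra_simps)
        finally show ?thesis .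
      qed
      have F1: "c * real n^2 \<le> b * (real m - real k) / ((real n + 1) * A)"
        unfolding pos_le_divide_eq[OF D] by (rule order_trans[OF t X])
      have F2: "c * ((2*real k^2 + real k + 3) / 4) \<le> c * real n^2"
      proof (rule mult_left_mono[OF _ less_imp_le[OF c]])
        have "real k \<le> real n" using kn by simp
        then have kk: "real k^2 \<le> real n^2" by (rule power_mono) simp
        have nn: "119 * real n \<le> real n * real n" by (rule mult_right_mono) (use n119 in auto)
        have sq: "real n^2 = real n * real n" by (rule power2_eq_square)
        have n1: "real n \<ge> 119" using n119 by simp
        have "2*real k^2 + real k + 3 \<le> 4 * real n^2" using kk nn sq n1 \<open>real k \<le> real n\<close> by linarith
        then show "(2*real k^2 + real k + 3) / 4 \<le> real n^2" by simp
      qed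
      have e1: "c * (2*real k^2 + real k + 3) / 4 = c * ((2*real k^2 + real k + 3) / 4)" by simp
    have e2: "c * real n^2 = c * real n^2" by simp
    show ?thesis using F1 F2 e1 e2 by linarith
    qed
  qed
  show ?thesis using goal E1 unfolding b_def N_def by linarith
qed

lemma card_H_ge: "n * 2^n \<le> card (horn_clauses n)"
proof -
  have "n * 2^n + 1 \<le> (n+1) * 2^n" by simp
  moreover have "\<forall>x y::nat. x + 1 \<le> y \<longrightarrow> x \<le> y - 1" by (intro allI impI) linarith
  ultimately show ?thesis unfolding card_H by blast
qed

lemma geom_half: "(\<Sum>k\<in>{1..n}. (1/2::real)^k) \<le> 1"
proof -
  have "(\<Sum>k\<in>{1..n}. (1/2::real)^k) = 1 - (1/2)^n"
    by (induction n) (simp_all add: field_simps)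
  then show ?thesis by simp
qed

lemma m_bounds:
  fixes c :: real assumes c: "c > 0"
  shows "real (nat \<lfloor>c * 2^n\<rfloor>) \<le> c * 2^n" "c * 2^n - 1 \<le> real (nat \<lfloor>c * 2^n\<rfloor>)"
proof -
  have p: "0 \<le> c * 2^n" using c by simp
  have e: "real (nat \<lfloor>c * 2^n\<rfloor>) = real_of_int \<lfloor>c * 2^n\<rfloor>" using p by simp
  show "real (nat \<lfloor>c * 2^n\<rfloor>) \<le> c * 2^n" unfolding e by (rule of_int_floor_le)
  show "c * 2^n - 1 \<le> real (nat \<lfloor>c * 2^n\<rfloor>)" unfolding e by linarith
qed

lemma upper_main:
  fixes c :: real and n :: nat
  assumes c: "c > 0" and two: "2 \<le> exp (c/4)"
    and n119: "n \<ge> 119" and h3: "120 * (real n + 1) \<le> c * 2^n"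
    and h4: "100 * real n^4 * (real n + 1)^2 \<le> 81 * 2^n / 2"
    and h5: "4 * c \<le> real n"
  shows "prob_sat n (nat \<lfloor>c * 2^n\<rfloor>) \<le> 4 * exp (- c)"
proof -
  define m where "m = nat \<lfloor>c * 2^n\<rfloor>"
  define N where "N = real (card (horn_clauses n))"
  have mu: "real m \<le> c * 2^n" and ml: "c * 2^n - 1 \<le> real m" unfolding m_def using m_bounds[OF c] by auto
  have n1: "n \<ge> 1" using n119 by simp
  have Npos: "N > 0" unfolding N_def using card_H_pos[OF n1] by simp
  have NA: "N \<le> (real n + 1) * 2^n"
  proof -
    have "real (card (horn_clauses n)) \<le> real ((n+1)*2^n)" using card_H_le by (simp only: of_nat_le_iff)
    then show ?thesis unfolding N_def by (simp add: algebra_simps)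
  qed
  have NB: "real n * 2^n \<le> N"
  proof -
    have "real (n * 2^n) \<le> real (card (horn_clauses n))" using card_H_ge by (simp only: of_nat_le_iff)
    then show ?thesis unfolding N_def by simp
  qed
  have h2: "120 \<le> c * 2^n" using h3 by simp
  have h3': "10 * (real n + 1) \<le> c * 2^n" using h3 by simp
  have nm: "real n * real m \<le> c * N"
  proof -
    have "real n * real m \<le> real n * (c * 2^n)" by (rule mult_left_mono[OF mu]) simp
    also have "\<dots> = c * (real n * 2^n)" by simp
    also have "\<dots> \<le> c * N" by (rule mult_left_mono[OF NB]) (use c in simp)
    finally show ?thesis .
  qed
  have nm_le: "n \<le> m"
  proof -
    have "real n \<le> real m" using ml h3' by simp
    then show ?thesis by simp
  qed
  define T where "T k = real (n choose k) * real (m choose k) * (real k*2^(k-1))^k *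
            (N - real (bnum n k))^(m-k) / N^m" for k
  have P: "prob_sat n m \<le> (\<Sum>k\<le>n. T k)" unfolding T_def N_def by (rule prob_upper[OF n1])
  have Tb: "T k \<le> (c * (real k*2^(k-1)))^k * exp (- (real (bnum n k) * (real m - real k) / N))" if k: "k \<le> n" for k
    unfolding T_def
  proof (rule term_bound[OF Npos])
    show "0 \<le> real (bnum n k)" by simp
    show "real (bnum n k) \<le> N" unfolding N_def using bnum_le[OF k] by (simp only: of_nat_le_iff)
    show "k \<le> m" using k nm_le by simp
    show "real n * real m \<le> c * N" by (rule nm)
    show "0 \<le> real k * 2^(k-1)" by simp
    show "0 \<le> c" using c by simp
  qed
  define A :: real where "A = 2^n"
  have A4: "A \<ge> 4"
  proof -
    have "(2::real)^2 \<le> 2^n" by (rule power_increasing) (use n119 in auto)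
    then show ?thesis unfolding A_def by simp
  qed
  have T0: "T 0 \<le> 2 * exp (- c)"
  proof -
    have "T 0 \<le> exp (- (real n * (real m - 0) / N))" using Tb[of 0] by (simp add: bnum_def)
    also have "\<dots> \<le> exp (- (c - 1/2))"
    proof -
      have key0: "(c - 1/2) * N \<le> real n * real m"
      proof (cases "c \<le> 1/2")
        case True
        have "(c - 1/2) * N \<le> 0" using True Npos by (simp add: mult_nonpos_nonneg)
        also have "0 \<le> real n * real m" by simp
        finally show ?thesis .
      next
        case False
        define X where "X = c * A"
        define Y where "Y = real n * A"
        have "(c - 1/2) * N \<le> (c - 1/2) * ((real n + 1) * A)"
          by (rule mult_left_mono) (use NA False in \<open>simp_all add: A_def\<close>)
        also have "(c - 1/2) * ((real n + 1) * A) = real n * X + X - Y / 2 - A / 2"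
          unfolding X_def Y_def by (simp add: algebra_simps)
        also have "\<dots> \<le> real n * (X - 1)"
        proof -
          have "c * A \<le> (real n / 4) * A" by (rule mult_right_mono) (use h5 A4 in auto)
          then have x: "X \<le> Y / 4" unfolding X_def Y_def by simp
          have "real n * 4 \<le> real n * A" by (rule mult_left_mono) (use A4 in auto)
          then have y: "real n \<le> Y / 4" unfolding Y_def by simp
          have "real n * (X - 1) = real n * X - real n" by (simp add: algebra_simps)
          then show ?thesis using x y A4 by linarith
        qed
        also have "\<dots> \<le> real n * real m"
          by (rule mult_left_mono) (use ml in \<open>simp_all add: X_def A_def\<close>)
        finally show ?thesis .
      qed
      have "c - 1/2 \<le> real n * real m / N" using key0 Npos by (simp add: pos_le_divide_eq)
      then show ?thesis by simp
    qed
    also have "exp (- (c - 1/2)) = exp (1/2) * exp (- c)" by (simp flip: exp_add)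
    also have "\<dots> \<le> 2 * exp (- c)" by (rule mult_right_mono[OF exp_half_le2]) simp
    finally show ?thesis .
  qed
  have Tk: "T k \<le> 2 * exp (- c) * (1/2)^k" if k1: "1 \<le> k" and kn: "k \<le> n" for k
  proof -
    have E: "c * (2*real k^2 + real k + 3) / 4 \<le> real (bnum n k) * (real m - real k) / N"
      unfolding N_def by (rule expo[OF c ml n119 h2 h3' h4 k1 kn])
    have "T k \<le> (c * (real k*2^(k-1)))^k * exp (- (real (bnum n k) * (real m - real k) / N))"
      by (rule Tb[OF kn])
    also have "\<dots> = (c * real k*2^(k-1))^k * exp (- (real (bnum n k) * (real m - real k) / N))"
      by (simp only: mult.assoc)
    also have "\<dots> \<le> 2 * exp (- c) * (1/2)^k" by (rule key[OF c two k1 E])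
    finally show ?thesis .
  qed
  have split: "{..n} = insert 0 {1..n}" by auto
  have "(\<Sum>k\<le>n. T k) = T 0 + (\<Sum>k\<in>{1..n}. T k)" unfolding split by (subst sum.insert) auto
  also have "\<dots> \<le> 2 * exp (- c) + (\<Sum>k\<in>{1..n}. 2 * exp (- c) * (1/2)^k)"
    by (rule add_mono[OF T0 sum_mono]) (use Tk in auto)
  also have "(\<Sum>k\<in>{1..n}. 2 * exp (- c) * (1/2::real)^k) = 2 * exp (- c) * (\<Sum>k\<in>{1..n}. (1/2)^k)"
    by (simp add: sum_distrib_left)
  also have "\<dots> \<le> 2 * exp (- c) * 1" by (rule mult_left_mono[OF geom_half]) simp
  finally have "(\<Sum>k\<le>n. T k) \<le> 4 * exp (- c)" by simp
  then show ?thesis using P unfolding m_def by simp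
qed

lemma lower_main:
  fixes c :: real and n :: nat
  assumes c: "c > 0" and n1: "n \<ge> 1"
  shows "exp (- c - 2 * c / 2^n) \<le> prob_sat n (nat \<lfloor>c * 2^n\<rfloor>)"
proof -
  define m where "m = nat \<lfloor>c * 2^n\<rfloor>"
  define N where "N = real (card (horn_clauses n))"
  define x where "x = real n / N"
  have mu: "real m \<le> c * 2^n" unfolding m_def using m_bounds[OF c] by auto
  have Npos: "N > 0" unfolding N_def using card_H_pos[OF n1] by simp
  have NB: "real n * 2^n \<le> N"
  proof -
    have "real (n * 2^n) \<le> real (card (horn_clauses n))" using card_H_ge by (simp only: of_nat_le_iff)
    then show ?thesis unfolding N_def by simp
  qed
  have x0: "0 \<le> x" unfolding x_def using Npos by simp
  have xle: "x \<le> 1 / 2^n"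
  proof -
    have "real n / N \<le> real n / (real n * 2^n)"
      by (rule divide_left_mono[OF NB]) (use n1 Npos in simp_all)
    also have "\<dots> = 1 / 2^n" using n1 by simp
    finally show ?thesis unfolding x_def .
  qed
  have half: "(1::real) / 2^n \<le> 1/2"
  proof -
    have "(2::real)^1 \<le> 2^n" by (rule power_increasing) (use n1 in auto)
    then show ?thesis by (simp add: divide_le_eq)
  qed
  have xh: "x \<le> 1/2" using xle half by linarith
  have mx: "real m * x \<le> c"
  proof -
    have "real n * real m \<le> real n * (c * 2^n)" by (rule mult_left_mono[OF mu]) simp
    also have "\<dots> = c * (real n * 2^n)" by simp
    also have "\<dots> \<le> c * N" by (rule mult_left_mono[OF NB]) (use c in simp)
    finally have "real n * real m \<le> c * N" .
    then show ?thesis unfolding x_def using Npos by (simp add: divide_le_eq mult.commute)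
  qed
  have mx0: "0 \<le> real m * x" using x0 by simp
  have lnb: "- x - 2 * x^2 \<le> ln (1 - x)" by (rule ln_one_minus_pos_lower_bound[OF x0 xh])
  have pos1: "0 < 1 - x" using xh by simp
  have "exp (- c - 2 * c / 2^n) = exp (- (c * (1 + 2 * (1 / 2^n))))" by (simp add: algebra_simps)
  also have "\<dots> \<le> exp (- ((real m * x) * (1 + 2 * x)))"
  proof -
    have "(real m * x) * (1 + 2 * x) \<le> c * (1 + 2 * (1 / 2^n))"
      by (rule mult_mono[OF mx]) (use xle x0 mx0 c in simp_all)
    then show ?thesis by simp
  qed
  also have "- ((real m * x) * (1 + 2 * x)) = real m * (- x - 2 * x^2)"
    by (simp add: algebra_simps power2_eq_square)
  also have "exp (real m * (- x - 2 * x^2)) \<le> exp (real m * ln (1 - x))"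
    by (subst exp_le_cancel_iff) (rule mult_left_mono[OF lnb], simp)
  also have "\<dots> = (1 - x) ^ m" using pos1 by (simp add: exp_of_nat_mult)
  also have "1 - x = (N - real n) / N" unfolding x_def using Npos by (simp add: field_simps)
  also have "((N - real n) / N) ^ m \<le> prob_sat n m" unfolding N_def by (rule prob_lower[OF n1])
  finally show ?thesis unfolding m_def .
qed

lemma ev_lower:
  fixes c \<epsilon> :: real assumes c: "c > 0" and e: "\<epsilon> > 0"
  shows "\<forall>\<^sub>F n in sequentially. exp (- c) - \<epsilon> \<le> prob_sat n (nat \<lfloor>c * 2^n\<rfloor>)"
proof -
  have "(\<lambda>n. (1/2::real)^n) \<longlonglongrightarrow> 0" by (rule LIMSEQ_power_zero) simp
  then have "(\<lambda>n. 2 * c * (1/2::real)^n) \<longlonglongrightarrow> 0" by (rule tendsto_mult_right_zero)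
  then have "(\<lambda>n. exp (- c - 2 * c * (1/2::real)^n)) \<longlonglongrightarrow> exp (- c - 0)"
    by (intro tendsto_intros)
  then have "(\<lambda>n. exp (- c - 2 * c / 2^n)) \<longlonglongrightarrow> exp (- c)" by (simp add: power_one_over)
  then have ev: "\<forall>\<^sub>F n in sequentially. exp (- c) - \<epsilon> < exp (- c - 2 * c / 2^n)"
    by (rule order_tendstoD) (use e in simp)
  show ?thesis using ev eventually_ge_at_top[of "1::nat"]
  proof eventually_elim
    case (elim n)
    then show ?case using lower_main[OF c, of n] by linarith
  qed
qed

lemma ev_upper:
  fixes c \<epsilon> :: real assumes c: "c > 0" and e: "\<epsilon> > 0"
  shows "\<forall>\<^sub>F n in sequentially. prob_sat n (nat \<lfloor>c * 2^n\<rfloor>) \<le> exp (- c / 4) / (1 - exp (- c / 4)) + \<epsilon>"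
proof -
  define x where "x = exp (- c / 4)"
  have x0: "0 < x" unfolding x_def by simp
  have x1: "x < 1" unfolding x_def using c by simp
  have xf: "x \<le> x / (1 - x)"
  proof -
    have "x * (1 - x) \<le> x" using x0 by (simp add: algebra_simps)
    then show ?thesis using x1 by (simp add: le_divide_eq)
  qed
  show ?thesis
  proof (cases "c \<le> 4 * ln 2")
    case True
    have "- ln 2 \<le> - c / 4" using True by simp
    then have "exp (- ln 2) \<le> x" unfolding x_def by simp
    then have "1/2 \<le> x" by (simp add: exp_minus)
    then have "1 \<le> x / (1 - x)" using x1 by (simp add: le_divide_eq)
    then have "\<forall>n. prob_sat n (nat \<lfloor>c * 2^n\<rfloor>) \<le> x / (1 - x) + \<epsilon>" using prob_le1 e
      by (smt (verit))
    then show ?thesis unfolding x_def by simp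
  next
    case False
    have "ln 2 < c / 4" using False by simp
    then have "exp (ln 2) < exp (c/4)" by (rule exp_less_mono)
    then have two: "2 \<le> exp (c/4)" by simp
    have "(2::real)^3 \<le> exp (c/4)^3" by (rule power_mono[OF two]) simp
    also have "exp (c/4)^3 = exp (3 * c / 4)" by (simp flip: exp_of_nat_mult)
    finally have e3: "8 \<le> exp (3 * c / 4)" by simp
    have bound: "4 * exp (- c) \<le> x / (1 - x)"
    proof -
      have "4 * exp (- c) = 4 * exp (- (3 * c / 4)) * x" unfolding x_def by (simp flip: exp_add)
      also have "\<dots> \<le> 1 * x"
      proof (rule mult_right_mono)
        have "4 * exp (- (3 * c / 4)) = 4 / exp (3 * c / 4)" by (simp add: exp_minus field_simps)
        also have "\<dots> \<le> 1" using e3 by simp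
        finally show "4 * exp (- (3 * c / 4)) \<le> 1" .
      qed (use x0 in simp)
      finally show ?thesis using xf by simp
    qed
    have f1: "filterlim (\<lambda>n. 2^n / (real n + 1)) at_top sequentially" by real_asymp
    have ev2: "\<forall>\<^sub>F n in sequentially. 120 / c \<le> 2^n / (real n + 1)"
      using f1 unfolding filterlim_at_top by blast
    have ev3: "\<forall>\<^sub>F n in sequentially. 100 * real n^4 * (real n + 1)^2 \<le> 81 * 2^n / 2" by real_asymp
    have ev4: "\<forall>\<^sub>F n in sequentially. 4 * c \<le> real n"
      using filterlim_real_sequentially unfolding filterlim_at_top by blast
    show ?thesis using eventually_ge_at_top[of "119::nat"] ev2 ev3 ev4
    proof eventually_elim
      case (elim n)
      have n119: "n \<ge> 119" using elim by simp
      have "120 / c * (real n + 1) \<le> 2^n" using elim(2) by (simp add: le_divide_eq)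
      then have "c * (120 / c * (real n + 1)) \<le> c * 2^n" by (rule mult_left_mono) (use c in simp)
      then have h3: "120 * (real n + 1) \<le> c * 2^n" using c by simp
      have "prob_sat n (nat \<lfloor>c * 2^n\<rfloor>) \<le> 4 * exp (- c)"
        by (rule upper_main[OF c two n119 h3 elim(3) elim(4)])
      then show ?case using bound e unfolding x_def by linarith
    qed
  qed
qed

theorem mainTheorem9:
  fixes c :: real
  assumes "c > 0"
  shows "\<forall>\<epsilon>>0. \<forall>\<^sub>F n in sequentially.
           exp (- c) - \<epsilon> \<le> prob_sat n (nat \<lfloor>c * 2 ^ n\<rfloor>) \<and>
           prob_sat n (nat \<lfloor>c * 2 ^ n\<rfloor>) \<le> exp (- c / 4) / (1 - exp (- c / 4)) + \<epsilon>"
proof (intro allI impI)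
  fix \<epsilon> :: real assume e: "\<epsilon> > 0"
  show "\<forall>\<^sub>F n in sequentially.
           exp (- c) - \<epsilon> \<le> prob_sat n (nat \<lfloor>c * 2 ^ n\<rfloor>) \<and>
           prob_sat n (nat \<lfloor>c * 2 ^ n\<rfloor>) \<le> exp (- c / 4) / (1 - exp (- c / 4)) + \<epsilon>"
    using ev_lower[OF assms e] ev_upper[OF assms e] by (rule eventually_conj)
qed

end
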